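(* Let $G=(V,E)$ be a directed graph, $s\neq t$ vertices, $u\in V$ and $l\ge 1$ an integer. Then there exists a (not necessarily simple) path from $s$ to $u$ of length at most $l$ not containing $t$ if and only if there exists a simple such path, and in that case $EV_l(s,u)=EV^*_l(s,u)$.
   Context: A path from $x$ to $y$ in $G$ is a vertex sequence $x=v_0,\dots,v_m=y$ with $(v_{i-1},v_i)\in E$ (vertices may repeat); its length is $m$ and $V(p)$ is its vertex set. A simple path has no repeated vertex. $EV_l(s,u)$ is the intersection of $V(p)$ over all paths $p$ (not necessarily simple) from $s$ to $u$ of length at most $l$ with $t\notin V(p)$, and it exists iff this family is nonempty. $EV^*_l(s,u)$ is the intersection of $V(p)$ over all simple paths $p$ from $s$ to $u$ of length at most $l$ with $t\notin V(p)$, and it exists iff this family is nonempty. *)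

theory Defs
  imports Main
begin

text \<open>A directed graph is a vertex set V and an edge set E \<subseteq> V \<times> V.
A path is a nonempty vertex list v0,...,vm with consecutive pairs in E;
its length is m = length p - 1 and V(p) = set p.\<close>

definition is_path :: "('a \<times> 'a) set \<Rightarrow> 'a \<Rightarrow> 'a \<Rightarrow> 'a list \<Rightarrow> bool" where
  "is_path E x y p \<longleftrightarrow> p \<noteq> [] \<and> hd p = x \<and> last p = y \<and>
     (\<forall>i. Suc i < length p \<longrightarrow> (p ! i, p ! Suc i) \<in> E)"

definition path_len :: "'a list \<Rightarrow> nat" where
  "path_len p = length p - 1"

definition bounded_paths :: "('a \<times> 'a) set \<Rightarrow> 'a \<Rightarrow> nat \<Rightarrow> 'a \<Rightarrow> 'a \<Rightarrow> 'a list set" where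
  "bounded_paths E t l s u = {p. is_path E s u p \<and> path_len p \<le> l \<and> t \<notin> set p}"

definition bounded_simple_paths :: "('a \<times> 'a) set \<Rightarrow> 'a \<Rightarrow> nat \<Rightarrow> 'a \<Rightarrow> 'a \<Rightarrow> 'a list set" where
  "bounded_simple_paths E t l s u = {p \<in> bounded_paths E t l s u. distinct p}"

definition EV :: "('a \<times> 'a) set \<Rightarrow> 'a \<Rightarrow> nat \<Rightarrow> 'a \<Rightarrow> 'a \<Rightarrow> 'a set" where
  "EV E t l s u = (\<Inter>p \<in> bounded_paths E t l s u. set p)"

definition EV_star :: "('a \<times> 'a) set \<Rightarrow> 'a \<Rightarrow> nat \<Rightarrow> 'a \<Rightarrow> 'a \<Rightarrow> 'a set" where
  "EV_star E t l s u = (\<Inter>p \<in> bounded_simple_paths E t l s u. set p)"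

end

theory Submission
  imports Defs
begin

fun pth :: "('a \<times> 'a) set \<Rightarrow> 'a list \<Rightarrow> bool" where
  "pth E [] = False"
| "pth E [a] = True"
| "pth E (a # b # p) = ((a, b) \<in> E \<and> pth E (b # p))"

lemma pth_conv: "(p \<noteq> [] \<and> (\<forall>i. Suc i < length p \<longrightarrow> (p ! i, p ! Suc i) \<in> E)) = pth E p"
proof (induction E p rule: pth.induct)
  case (3 E a b p)
  have "(\<forall>i. Suc i < length (a # b # p) \<longrightarrow> ((a # b # p) ! i, (a # b # p) ! Suc i) \<in> E)
     = ((a, b) \<in> E \<and> (\<forall>i. Suc i < length (b # p) \<longrightarrow> ((b # p) ! i, (b # p) ! Suc i) \<in> E))"
    (is "?L = ?R")
  proof
    assume ?L
    then show ?R
      by (metis Suc_less_eq length_Cons nth_Cons_0 nth_Cons_Suc zero_less_Suc)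
  next
    assume r: ?R
    show ?L
    proof (intro allI impI)
      fix i assume "Suc i < length (a # b # p)"
      then show "((a # b # p) ! i, (a # b # p) ! Suc i) \<in> E"
        using r by (cases i) auto
    qed
  qed
  then show ?case using 3 by simp
qed auto

lemma is_path_conv: "is_path E x y p = (hd p = x \<and> last p = y \<and> pth E p)"
  unfolding is_path_def using pth_conv[of p E] by auto

lemma pth_suffix: "pth E (xs @ ys) \<Longrightarrow> ys \<noteq> [] \<Longrightarrow> pth E ys"
proof (induction xs)
  case (Cons a xs)
  then show ?case by (cases "xs @ ys") auto
qed simp

lemma simplify_path:
  "pth E p \<Longrightarrow> \<exists>q. pth E q \<and> distinct q \<and> set q \<subseteq> set p \<and> length q \<le> length p
     \<and> hd q = hd p \<and> last q = last p"
proof (induction E p rule: pth.induct)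
  case (2 E a)
  then show ?case by (intro exI[of _ "[a]"]) auto
next
  case (3 E a b p)
  then obtain q where q: "pth E q" "distinct q" "set q \<subseteq> set (b # p)" "length q \<le> length (b # p)"
    "hd q = b" "last q = last (b # p)" by auto
  show ?case
  proof (cases "a \<in> set q")
    case True
    then obtain xs ys where xy: "q = xs @ a # ys" by (meson split_list)
    have "pth E (a # ys)" using pth_suffix[of E xs "a # ys"] q(1) xy by simp
    moreover have "last (a # ys) = last q" using xy by simp
    ultimately show ?thesis using q xy
      by (intro exI[of _ "a # ys"]) auto
  next
    case False
    have "q \<noteq> []" using q(1) by (cases q) auto
    then obtain r where "q = b # r" using q(5) by (cases q) auto
    then show ?thesis using q False 3(2)
      by (intro exI[of _ "a # q"]) auto
  qed
qed simp

theorem theorem3p5: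
  fixes V :: "'a set" and E :: "('a \<times> 'a) set" and s t u :: 'a and l :: nat
  assumes "E \<subseteq> V \<times> V"
    and "s \<in> V" and "t \<in> V" and "u \<in> V"
    and "s \<noteq> t"
    and "l \<ge> 1"
  shows "(bounded_paths E t l s u \<noteq> {} \<longleftrightarrow> bounded_simple_paths E t l s u \<noteq> {})
         \<and> (bounded_paths E t l s u \<noteq> {} \<longrightarrow> EV E t l s u = EV_star E t l s u)"
proof -
  have key: "\<exists>q \<in> bounded_simple_paths E t l s u. set q \<subseteq> set p"
    if "p \<in> bounded_paths E t l s u" for p
  proof -
    from that have p: "hd p = s" "last p = u" "pth E p" "length p - 1 \<le> l" "t \<notin> set p"
      unfolding bounded_paths_def is_path_conv path_len_def by auto
    obtain q where q: "pth E q" "distinct q" "set q \<subseteq> set p" "length q \<le> length p"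
      "hd q = hd p" "last q = last p" using simplify_path[OF p(3)] by blast
    have "q \<in> bounded_simple_paths E t l s u"
      unfolding bounded_simple_paths_def bounded_paths_def is_path_conv path_len_def
      using p q by auto
    then show ?thesis using q(3) by blast
  qed
  have sub: "bounded_simple_paths E t l s u \<subseteq> bounded_paths E t l s u"
    unfolding bounded_simple_paths_def by auto
  have "EV E t l s u = EV_star E t l s u"
  proof
    show "EV E t l s u \<subseteq> EV_star E t l s u"
      unfolding EV_def EV_star_def using sub by blast
    show "EV_star E t l s u \<subseteq> EV E t l s u"
      unfolding EV_def EV_star_def using key by blast
  qed
  moreover have "bounded_paths E t l s u \<noteq> {} \<longleftrightarrow> bounded_simple_paths E t l s u \<noteq> {}"
    using key sub by blast
  ultimately show ?thesis by blast
qed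

end
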